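(* Let $U$ be a nonempty finite set, $R\subseteq U\times U$ serial and transitive, and $cl$ the closure operator of the matroid $M(Reg(U,R))$. Then for every $e\in U\setminus\bigcup\mathcal{A}(Reg(U,R))$, $cl(\{e\})=\{e\}$.
   Context: $R_s(x)=\{y\in U\mid xRy\}$; $\underline{R}(X)=\{x\mid R_s(x)\subseteq X\}$, $\overline{R}(X)=\{x\mid R_s(x)\cap X\neq\emptyset\}$; $X$ is regular if $X=\underline{R}(\overline{R}(X))$, and $Reg(U,R)$ is the lattice of regular sets under inclusion, with least element $\emptyset$. $\mathcal{A}(Reg(U,R))$ is the set of atoms (elements covering $\emptyset$) of this lattice. $h(A)$ is the length of a maximal chain in $[\emptyset,A]$. $M(Reg(U,R))$ is the matroid on $U$ with independent sets $\{X\subseteq U\mid h(Y)\ge|X\cap Y|\ \forall Y\in Reg(U,R)\}$, rank function $r(X)=\max\{|I|\mid I\subseteq X \text{ independent}\}$, and closure operator $cl(X)=\{u\in U\mid r(X\cup\{u\})=r(X)\}$. *)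

theory Defs
  imports Main
begin

definition succ_set :: "'a set \<Rightarrow> ('a \<times> 'a) set \<Rightarrow> 'a \<Rightarrow> 'a set" where
  "succ_set U R x = {y \<in> U. (x, y) \<in> R}"

definition lower_approx :: "'a set \<Rightarrow> ('a \<times> 'a) set \<Rightarrow> 'a set \<Rightarrow> 'a set" where
  "lower_approx U R X = {x \<in> U. succ_set U R x \<subseteq> X}"

definition upper_approx :: "'a set \<Rightarrow> ('a \<times> 'a) set \<Rightarrow> 'a set \<Rightarrow> 'a set" where
  "upper_approx U R X = {x \<in> U. succ_set U R x \<inter> X \<noteq> {}}"

definition regular :: "'a set \<Rightarrow> ('a \<times> 'a) set \<Rightarrow> 'a set \<Rightarrow> bool" where
  "regular U R X \<longleftrightarrow> X = lower_approx U R (upper_approx U R X)"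

definition Reg :: "'a set \<Rightarrow> ('a \<times> 'a) set \<Rightarrow> 'a set set" where
  "Reg U R = {X. X \<subseteq> U \<and> regular U R X}"

definition atoms :: "'a set \<Rightarrow> ('a \<times> 'a) set \<Rightarrow> 'a set set" where
  "atoms U R = {A \<in> Reg U R. A \<noteq> {} \<and> \<not> (\<exists>B \<in> Reg U R. {} \<subset> B \<and> B \<subset> A)}"

definition serial_on :: "'a set \<Rightarrow> ('a \<times> 'a) set \<Rightarrow> bool" where
  "serial_on U R \<longleftrightarrow> (\<forall>x \<in> U. \<exists>y \<in> U. (x, y) \<in> R)"

text \<open>Chains of the lattice inside the interval [{}, A]; a chain with k+1 elements has length k.\<close>
definition reg_chain :: "'a set \<Rightarrow> ('a \<times> 'a) set \<Rightarrow> 'a set \<Rightarrow> 'a set set \<Rightarrow> bool" where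
  "reg_chain U R A C \<longleftrightarrow> C \<subseteq> {Y \<in> Reg U R. Y \<subseteq> A} \<and> C \<noteq> {}
      \<and> (\<forall>X \<in> C. \<forall>Y \<in> C. X \<subseteq> Y \<or> Y \<subseteq> X)"

text \<open>h(A): length of a maximal chain in [{}, A], taken as the length of a longest chain
  (a longest chain is always maximal).\<close>
definition height :: "'a set \<Rightarrow> ('a \<times> 'a) set \<Rightarrow> 'a set \<Rightarrow> nat" where
  "height U R A = Max {card C - 1 | C. reg_chain U R A C}"

definition indep :: "'a set \<Rightarrow> ('a \<times> 'a) set \<Rightarrow> 'a set \<Rightarrow> bool" where
  "indep U R X \<longleftrightarrow> X \<subseteq> U \<and> (\<forall>Y \<in> Reg U R. height U R Y \<ge> card (X \<inter> Y))"

definition rank :: "'a set \<Rightarrow> ('a \<times> 'a) set \<Rightarrow> 'a set \<Rightarrow> nat" where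
  "rank U R X = Max {card I | I. I \<subseteq> X \<and> indep U R I}"

definition mclosure :: "'a set \<Rightarrow> ('a \<times> 'a) set \<Rightarrow> 'a set \<Rightarrow> 'a set" where
  "mclosure U R X = {u \<in> U. rank U R (X \<union> {u}) = rank U R X}"

end

theory Submission
  imports Defs
begin

lemma height_ge:
  assumes fin: "finite U" and ch: "reg_chain U R A C"
  shows "card C - 1 \<le> height U R A"
proof -
  have "{card C - 1 | C. reg_chain U R A C} \<subseteq> (\<lambda>C. card C - 1) ` Pow (Pow U)"
  proof
    fix x assume "x \<in> {card C - 1 | C. reg_chain U R A C}"
    then obtain C where "x = card C - 1" "reg_chain U R A C" by blast
    moreover hence "C \<in> Pow (Pow U)" by (auto simp: reg_chain_def Reg_def)
    ultimately show "x \<in> (\<lambda>C. card C - 1) ` Pow (Pow U)" by blast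
  qed
  hence "finite {card C - 1 | C. reg_chain U R A C}"
    using fin by (meson finite_Pow_iff finite_imageI finite_subset)
  thus ?thesis unfolding height_def using ch by (intro Max_ge) auto
qed

lemma empty_Reg:
  assumes "serial_on U R" "R \<subseteq> U \<times> U"
  shows "{} \<in> Reg U R"
  using assms unfolding Reg_def regular_def lower_approx_def upper_approx_def succ_set_def serial_on_def
  by auto

theorem proposition5:
  fixes U :: "'a set" and R :: "('a \<times> 'a) set"
  assumes "finite U" and "U \<noteq> {}"
    and "R \<subseteq> U \<times> U" and "serial_on U R" and "trans R"
    and "e \<in> U - \<Union> (atoms U R)"
  shows "mclosure U R {e} = {e}"
proof -
  have E: "{} \<in> Reg U R" using empty_Reg assms(3,4) by blast
  have eU: "e \<in> U" using assms(6) by blast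
  have indep2: "indep U R {e, u}" if "u \<in> U" for u
    unfolding indep_def
  proof (intro conjI ballI)
    show "{e, u} \<subseteq> U" using eU that by blast
  next
    fix Y assume Y: "Y \<in> Reg U R"
    have YU: "Y \<subseteq> U" using Y by (simp add: Reg_def)
    show "card ({e, u} \<inter> Y) \<le> height U R Y"
    proof (cases "e \<in> Y")
      case True
      have "Y \<notin> atoms U R" using assms(6) True by blast
      then obtain B where B: "B \<in> Reg U R" "{} \<subset> B" "B \<subset> Y"
        using Y True unfolding atoms_def by blast
      have "reg_chain U R Y {{}, B, Y}"
        unfolding reg_chain_def using B Y E by auto
      hence "card {{}, B, Y} - 1 \<le> height U R Y" using height_ge assms(1) by blast
      moreover have "card {{}, B, Y} = 3" 
      proof -
        have "{} \<noteq> Y" using B by blast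
        thus ?thesis using B by (simp add: psubset_eq)
      qed
      moreover have "card ({e, u} \<inter> Y) \<le> 2"
      proof -
        have "card ({e, u} \<inter> Y) \<le> card {e, u}" by (intro card_mono) auto
        also have "\<dots> \<le> 2" by (simp add: card_insert_if)
        finally show ?thesis .
      qed
      ultimately show ?thesis by linarith
    next
      case False
      show ?thesis
      proof (cases "u \<in> Y")
        case True
        have "reg_chain U R Y {{}, Y}"
          unfolding reg_chain_def using Y E by auto
        hence "card {{}, Y} - 1 \<le> height U R Y" using height_ge assms(1) by blast
        moreover have "card {{}, Y} = 2"
        proof -
          have "{} \<noteq> Y" using True by blast
          thus ?thesis by simp
        qed
        moreover have "{e, u} \<inter> Y = {u}" using True False by auto
        ultimately show ?thesis by simp
      next
        case False2: False
        have "{e, u} \<inter> Y = {}" using False False2 by auto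
        thus ?thesis by simp
      qed
    qed
  qed
  have rank1: "rank U R {e} \<le> 1"
  proof -
    have "{card I | I. I \<subseteq> {e} \<and> indep U R I} \<subseteq> card ` Pow {e}" by auto
    hence fin: "finite {card I | I. I \<subseteq> {e} \<and> indep U R I}" by (meson finite_Pow_iff finite_imageI finite_subset finite.intros)
    have ne: "{card I | I. I \<subseteq> {e} \<and> indep U R I} \<noteq> {}"
      using indep2[OF eU] unfolding indep_def by auto
    have "\<forall>x \<in> {card I | I. I \<subseteq> {e} \<and> indep U R I}. x \<le> 1"
      using card_mono[of "{e}"] by fastforce
    thus ?thesis unfolding rank_def using fin ne by simp
  qed
  have rank2: "rank U R {e, u} \<ge> 2" if "u \<in> U" "u \<noteq> e" for u
  proof -
    have "{card I | I. I \<subseteq> {e, u} \<and> indep U R I} \<subseteq> card ` Pow {e, u}" by auto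
    hence fin: "finite {card I | I. I \<subseteq> {e, u} \<and> indep U R I}" by (meson finite_Pow_iff finite_imageI finite_subset finite.intros)
    have "card {e, u} \<in> {card I | I. I \<subseteq> {e, u} \<and> indep U R I}" using indep2[OF that(1)] by blast
    hence "card {e, u} \<le> rank U R {e, u}" unfolding rank_def using fin by simp
    thus ?thesis using that by simp
  qed
  show ?thesis
  proof (rule set_eqI, rule iffI)
    fix u assume u: "u \<in> mclosure U R {e}"
    hence uU: "u \<in> U" and eq: "rank U R ({e} \<union> {u}) = rank U R {e}" by (auto simp: mclosure_def)
    show "u \<in> {e}"
    proof (rule ccontr)
      assume "u \<notin> {e}"
      hence "rank U R {e, u} \<ge> 2" using rank2 uU by auto
      moreover have "{e} \<union> {u} = {e, u}" by auto
      ultimately show False using eq rank1 by simp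
    qed
  next
    fix u assume "u \<in> {e}" thus "u \<in> mclosure U R {e}" using eU by (simp add: mclosure_def)
  qed
qed

end
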